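(* Let $\Sigma$ be a first-order language and let $\mathcal{T}_\Sigma$ be the family of all complete theories in $\Sigma$ (in the sense described in the context). Then $\mathcal{T}_\Sigma$ is $e$-minimal if and only if either $\Sigma=\emptyset$ or $\Sigma$ consists of exactly one constant symbol.
   Context: Theories are complete consistent first-order theories; structures have nonempty universes. If $\Sigma$ is relational, $\mathcal{T}_\Sigma$ is the family of all complete theories of $\Sigma$-structures. If $\Sigma$ contains function symbols (constants being $0$-ary function symbols), each $n$-ary function symbol $f$ is replaced by an $(n+1)$-ary predicate symbol $R_f$ interpreted as the graph $\{(\bar a,b)\mid f(\bar a)=b\}$, and $\mathcal{T}_\Sigma$ is the family of all complete theories of $\Sigma$-structures viewed in this relational language $\Sigma'$. For a family $\mathcal{T}$ of theories and a sentence $\varphi$ of its language, $\mathcal{T}_\varphi=\{T\in\mathcal{T}\mid \varphi\in T\}$. A family $\mathcal{T}$ is called $e$-minimal if it is infinite and for every sentence $\varphi$ of its language, $\mathcal{T}_\varphi$ is finite or $\mathcal{T}_{\neg\varphi}$ is finite. *)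

theory Defs
  imports Main
begin

text \<open>A signature: relation symbols with arities and function symbols with arities
  (constants = 0-ary function symbols). A symbol s is a relation symbol of arity n iff
  fst Sig s = Some n, and a function symbol of arity n iff snd Sig s = Some n.\<close>
type_synonym 's signature = "('s \<Rightarrow> nat option) \<times> ('s \<Rightarrow> nat option)"

text \<open>Predicate symbols of the relational language Sigma': relation symbols R and
  graph predicates R_f (of arity n+1) for n-ary function symbols f.\<close>
datatype 's sym = Rel 's | FunGraph 's

datatype 'p form = Eq nat nat | Pred 'p "nat list" | Neg "'p form"
  | Conj "'p form" "'p form" | Ex nat "'p form"

fun fv :: "'p form \<Rightarrow> nat set" where
  "fv (Eq x y) = {x, y}"
| "fv (Pred p xs) = set xs"
| "fv (Neg \<phi>) = fv \<phi>"
| "fv (Conj \<phi> \<psi>) = fv \<phi> \<union> fv \<psi>"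
| "fv (Ex x \<phi>) = fv \<phi> - {x}"

fun wf_form :: "'s signature \<Rightarrow> 's sym form \<Rightarrow> bool" where
  "wf_form Sig (Eq x y) = True"
| "wf_form Sig (Pred (Rel r) xs) = (fst Sig r = Some (length xs))"
| "wf_form Sig (Pred (FunGraph f) xs) = (\<exists>n. snd Sig f = Some n \<and> length xs = Suc n)"
| "wf_form Sig (Neg \<phi>) = wf_form Sig \<phi>"
| "wf_form Sig (Conj \<phi> \<psi>) = (wf_form Sig \<phi> \<and> wf_form Sig \<psi>)"
| "wf_form Sig (Ex x \<phi>) = wf_form Sig \<phi>"

definition sentence :: "'s signature \<Rightarrow> 's sym form \<Rightarrow> bool" where
  "sentence Sig \<phi> \<longleftrightarrow> wf_form Sig \<phi> \<and> fv \<phi> = {}"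

fun sat :: "'u set \<Rightarrow> ('s \<Rightarrow> 'u list \<Rightarrow> bool) \<Rightarrow> ('s \<Rightarrow> 'u list \<Rightarrow> 'u)
             \<Rightarrow> (nat \<Rightarrow> 'u) \<Rightarrow> 's sym form \<Rightarrow> bool" where
  "sat U I F v (Eq x y) = (v x = v y)"
| "sat U I F v (Pred (Rel r) xs) = I r (map v xs)"
| "sat U I F v (Pred (FunGraph f) xs) =
     (xs \<noteq> [] \<and> F f (map v (butlast xs)) = v (last xs))"
| "sat U I F v (Neg \<phi>) = (\<not> sat U I F v \<phi>)"
| "sat U I F v (Conj \<phi> \<psi>) = (sat U I F v \<phi> \<and> sat U I F v \<psi>)"
| "sat U I F v (Ex x \<phi>) = (\<exists>a\<in>U. sat U I F (v(x := a)) \<phi>)"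

definition is_structure :: "'s signature \<Rightarrow> 'u set \<Rightarrow> ('s \<Rightarrow> 'u list \<Rightarrow> 'u) \<Rightarrow> bool" where
  "is_structure Sig U F \<longleftrightarrow> U \<noteq> {} \<and>
     (\<forall>f n xs. snd Sig f = Some n \<longrightarrow> length xs = n \<longrightarrow> set xs \<subseteq> U \<longrightarrow> F f xs \<in> U)"

definition Th :: "'s signature \<Rightarrow> 'u set \<Rightarrow> ('s \<Rightarrow> 'u list \<Rightarrow> bool) \<Rightarrow> ('s \<Rightarrow> 'u list \<Rightarrow> 'u)
                  \<Rightarrow> 's sym form set" where
  "Th Sig U I F = {\<phi>. sentence Sig \<phi> \<and> (\<forall>v. (\<forall>n. v n \<in> U) \<longrightarrow> sat U I F v \<phi>)}"

text \<open>Universes are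
  taken inside the type 's + nat, whose cardinality is |'s| + aleph_0 \<ge> |Sig| + aleph_0;
  by downward Loewenheim-Skolem every complete theory of a Sig-structure is realised
  by such a structure, so this is the family of all complete Sig-theories.\<close>
definition complete_theories :: "'s signature \<Rightarrow> 's sym form set set" where
  "complete_theories Sig =
     {Th Sig U I F | (U :: ('s + nat) set) I F. is_structure Sig U F}"

definition theories_with :: "'p form set set \<Rightarrow> 'p form \<Rightarrow> 'p form set set" where
  "theories_with \<T> \<phi> = {T \<in> \<T>. \<phi> \<in> T}"

definition e_minimal :: "'s signature \<Rightarrow> 's sym form set set \<Rightarrow> bool" where
  "e_minimal Sig \<T> \<longleftrightarrow> infinite \<T> \<and>
     (\<forall>\<phi>. sentence Sig \<phi> \<longrightarrow>
        finite (theories_with \<T> \<phi>) \<or> finite (theories_with \<T> (Neg \<phi>)))"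

definition empty_signature :: "'s signature \<Rightarrow> bool" where
  "empty_signature Sig \<longleftrightarrow> fst Sig = (\<lambda>_. None) \<and> snd Sig = (\<lambda>_. None)"

definition single_constant_signature :: "'s signature \<Rightarrow> bool" where
  "single_constant_signature Sig \<longleftrightarrow>
     fst Sig = (\<lambda>_. None) \<and> (\<exists>c. snd Sig = (\<lambda>_. None)(c := Some 0))"

end

theory Submission
  imports Defs
begin


fun qr :: "'p form \<Rightarrow> nat" where
  "qr (Eq x y) = 0"
| "qr (Pred p xs) = 0"
| "qr (Neg \<phi>) = qr \<phi>"
| "qr (Conj \<phi> \<psi>) = max (qr \<phi>) (qr \<psi>)"
| "qr (Ex x \<phi>) = Suc (qr \<phi>)"

definition big :: "nat \<Rightarrow> 'u set \<Rightarrow> bool" where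
  "big N U \<longleftrightarrow> infinite U \<or> N \<le> card U"

definition good :: "nat \<Rightarrow> 'u set \<Rightarrow> 'v set \<Rightarrow> bool" where
  "good N U U' \<longleftrightarrow> (big N U \<and> big N U') \<or> (finite U \<and> finite U' \<and> card U = card U')"

lemma card_eq_pat:
  assumes "finite Y" "\<forall>y\<in>Y. \<forall>z\<in>Y. (v y = v z) = (v' y = v' z)"
    "\<forall>y\<in>Y. (v y = a) = (v' y = a')"
  shows "card (insert a (v ` Y)) = card (insert a' (v' ` Y))"
  using assms
proof (induction Y rule: finite_induct)
  case empty
  then show ?case by simp
next
  case (insert y Y)
  have e: "(v y \<in> insert a (v ` Y)) = (v' y \<in> insert a' (v' ` Y))"
    using insert.prems by auto
  have "card (insert a (v ` insert y Y)) = card (insert (v y) (insert a (v ` Y)))"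
    by (simp add: insert_commute)
  also have "\<dots> = card (insert (v' y) (insert a' (v' ` Y)))"
    using e insert by (simp add: card_insert_if)
  also have "\<dots> = card (insert a' (v' ` insert y Y))"
    by (simp add: insert_commute)
  finally show ?case .
qed

lemma ext_step:
  assumes fin: "finite X" and aU: "a \<in> U" and aU': "a' \<in> U'"
    and vU: "\<forall>x\<in>X. v x \<in> U" and vU': "\<forall>x\<in>X. v' x \<in> U'"
    and pat: "\<forall>y\<in>X. \<forall>z\<in>X. (v y = v z) = (v' y = v' z)"
    and ca: "\<forall>y\<in>X. (v y = a) = (v' y = a')"
    and bU: "b \<in> U"
    and sz: "big (card X + 2) U' \<or> (finite U \<and> finite U' \<and> card U = card U')"
  shows "\<exists>b'\<in>U'. (\<forall>y\<in>X-{x}. (v y = b) = (v' y = b')) \<and> ((b = a) = (b' = a'))"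
proof -
  let ?Y = "X - {x}"
  show ?thesis
  proof (cases "\<exists>y\<in>?Y. v y = b")
    case True
    then obtain y where y: "y \<in> ?Y" "v y = b" by blast
    show ?thesis
      apply (rule bexI[of _ "v' y"])
      using y pat ca vU' by auto
  next
    case nb: False
    show ?thesis
    proof (cases "b = a")
      case True
      then show ?thesis using nb ca aU' by auto
    next
      case nba: False
      have fY: "finite ?Y" using fin by simp
      have "\<exists>b'\<in>U'. b' \<notin> insert a' (v' ` ?Y)"
      proof (rule ccontr)
        assume "\<not> ?thesis"
        hence sub: "U' \<subseteq> insert a' (v' ` ?Y)" by blast
        have c1: "card (insert a' (v' ` ?Y)) \<le> card X + 1"
        proof -
          have "card (insert a' (v' ` ?Y)) \<le> Suc (card (v' ` ?Y))"
            using fY card_insert_le_m1 by (simp add: card_insert_if)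
          also have "\<dots> \<le> Suc (card ?Y)" using card_image_le fY by auto
          also have "\<dots> \<le> Suc (card X)" using fin card_mono by fastforce
          finally show ?thesis by simp
        qed
        from sz show False
        proof
          assume b: "big (card X + 2) U'"
          have fU': "finite U'" using sub fY finite_subset by blast
          hence "card X + 2 \<le> card U'" using b by (simp add: big_def)
          moreover have "card U' \<le> card (insert a' (v' ` ?Y))"
            using sub fY by (simp add: card_mono)
          ultimately show False using c1 by simp
        next
          assume e: "finite U \<and> finite U' \<and> card U = card U'"
          have ce: "card (insert a (v ` ?Y)) = card (insert a' (v' ` ?Y))"
            by (rule card_eq_pat[OF fY]) (use pat ca in auto)
          have psub: "insert a (v ` ?Y) \<subset> U" using aU vU bU nb nba by auto
          hence "card (insert a (v ` ?Y)) < card U" using e psubset_card_mono by blast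
          moreover have "card U' \<le> card (insert a' (v' ` ?Y))"
            using sub fY by (simp add: card_mono)
          ultimately show False using ce e by simp
        qed
      qed
      then obtain b' where "b' \<in> U'" "b' \<notin> insert a' (v' ` ?Y)" by blast
      then show ?thesis using nb nba by (intro bexI[of _ b']) auto
    qed
  qed
qed

lemma good_mono: "good N U U' \<Longrightarrow> M \<le> N \<Longrightarrow> good M U U'"
  unfolding good_def big_def by auto

lemma good_sym: "good N U U' \<Longrightarrow> good N U' U"
  unfolding good_def by auto

definition hyp where
  "hyp Sig c a a' F F' \<longleftrightarrow> fst Sig = (\<lambda>_. None) \<and>
     (\<forall>f n. snd Sig f = Some n \<longrightarrow> f = c \<and> n = 0 \<and> F c [] = a \<and> F' c [] = a')"

lemma ext2:
  assumes fin: "finite X" and aU: "a \<in> U" and aU': "a' \<in> U'"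
    and vU: "\<forall>x\<in>X. v x \<in> U" and vU': "\<forall>x\<in>X. v' x \<in> U'"
    and pat: "\<forall>y\<in>X. \<forall>z\<in>X. (v y = v z) = (v' y = v' z)"
    and ca: "\<forall>y\<in>X. (v y = a) = (v' y = a')"
    and bU: "b \<in> U"
    and sz: "good (card X + 2) U U'"
  shows "\<exists>b'\<in>U'. (\<forall>y\<in>insert x X. \<forall>z\<in>insert x X. ((v(x:=b)) y = (v(x:=b)) z) = ((v'(x:=b')) y = (v'(x:=b')) z))
     \<and> (\<forall>y\<in>insert x X. ((v(x:=b)) y = a) = ((v'(x:=b')) y = a'))"
proof -
  have "big (card X + 2) U' \<or> (finite U \<and> finite U' \<and> card U = card U')"
    using sz unfolding good_def by auto
  from ext_step[OF fin aU aU' vU vU' pat ca bU this, of x]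
  obtain b' where b': "b' \<in> U'" "\<forall>y\<in>X-{x}. (v y = b) = (v' y = b')" "(b = a) = (b' = a')"
    by blast
  have A: "((v(x:=b)) y = (v(x:=b)) z) = ((v'(x:=b')) y = (v'(x:=b')) z)"
    if "y \<in> insert x X" "z \<in> insert x X" for y z
  proof (cases "y = x")
    case True
    then show ?thesis
    proof (cases "z = x")
      case False
      then show ?thesis using True that b'(2) by auto
    qed simp
  next
    case False
    then show ?thesis
    proof (cases "z = x")
      case True
      then show ?thesis using False that b'(2) by simp
    next
      case False2: False
      then show ?thesis using False that pat by simp
    qed
  qed
  have B: "((v(x:=b)) y = a) = ((v'(x:=b')) y = a')" if "y \<in> insert x X" for y
    using that b'(3) ca by (cases "y = x") auto
  show ?thesis
    using A B b'(1) by blast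
qed

lemma ef:
  assumes "wf_form Sig \<phi>" "finite X" "fv \<phi> \<subseteq> X" "a \<in> U" "a' \<in> U'"
    "\<forall>x\<in>X. v x \<in> U" "\<forall>x\<in>X. v' x \<in> U'"
    "\<forall>y\<in>X. \<forall>z\<in>X. (v y = v z) = (v' y = v' z)"
    "\<forall>y\<in>X. (v y = a) = (v' y = a')"
    "good (card X + 1 + qr \<phi>) U U'" "hyp Sig c a a' F F'"
  shows "sat U I F v \<phi> = sat U' I' F' v' \<phi>"
  using assms
proof (induction \<phi> arbitrary: X v v')
  case (Eq x y)
  then show ?case by auto
next
  case (Pred p xs)
  show ?case
  proof (cases p)
    case (Rel r)
    then have "fst Sig r = Some (length xs)" using Pred(1) by simp
    moreover have "fst Sig r = None" using Pred(11) unfolding hyp_def by simp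
    ultimately show ?thesis by simp
  next
    case (FunGraph f)
    have "\<exists>n. snd Sig f = Some n \<and> length xs = Suc n" using Pred(1) FunGraph by simp
    then obtain n where n: "snd Sig f = Some n" "length xs = Suc n" by blast
    have h: "f = c \<and> n = 0 \<and> F c [] = a \<and> F' c [] = a'"
      using Pred(11) n(1) unfolding hyp_def by blast
    obtain x where xs: "xs = [x]" using n(2) h by (cases xs) auto
    have xX: "x \<in> X" using Pred(3) xs by simp
    have "sat U I F v (Pred p xs) = (a = v x)" using h by (simp add: FunGraph xs)
    moreover have "sat U' I' F' v' (Pred p xs) = (a' = v' x)" using h by (simp add: FunGraph xs)
    ultimately show ?thesis using Pred(9) xX by auto
  qed
next
  case (Neg \<phi>)
  have "sat U I F v \<phi> = sat U' I' F' v' \<phi>"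
    apply (rule Neg.IH[OF _ Neg.prems(2) _ Neg.prems(4-9) _ Neg.prems(11)])
    using Neg.prems(1,3,10) by auto
  then show ?case by simp
next
  case (Conj \<phi>1 \<phi>2)
  have g1: "good (card X + 1 + qr \<phi>1) U U'" "good (card X + 1 + qr \<phi>2) U U'"
    by (rule good_mono[OF Conj.prems(10)], simp)+
  have "sat U I F v \<phi>1 = sat U' I' F' v' \<phi>1"
    apply (rule Conj.IH(1)[OF _ Conj.prems(2) _ Conj.prems(4-9) g1(1) Conj.prems(11)])
    using Conj.prems(1,3) by auto
  moreover have "sat U I F v \<phi>2 = sat U' I' F' v' \<phi>2"
    apply (rule Conj.IH(2)[OF _ Conj.prems(2) _ Conj.prems(4-9) g1(2) Conj.prems(11)])
    using Conj.prems(1,3) by auto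
  ultimately show ?case by simp
next
  case (Ex x \<phi>)
  let ?X = "insert x X"
  have cX: "card ?X + 1 + qr \<phi> \<le> card X + 1 + qr (Ex x \<phi>)"
    using Ex.prems(2) by (simp add: card_insert_if)
  have g: "good (card ?X + 1 + qr \<phi>) U U'" by (rule good_mono[OF Ex.prems(10) cX])
  have g2: "good (card X + 2) U U'" by (rule good_mono[OF Ex.prems(10)]) simp
  have IH: "sat U I F (v(x:=b)) \<phi> = sat U' I' F' (v'(x:=b')) \<phi>"
    if "b \<in> U" "b' \<in> U'"
      "\<forall>y\<in>?X. \<forall>z\<in>?X. ((v(x:=b)) y = (v(x:=b)) z) = ((v'(x:=b')) y = (v'(x:=b')) z)"
      "\<forall>y\<in>?X. ((v(x:=b)) y = a) = ((v'(x:=b')) y = a')" for b b'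
    apply (rule Ex.IH[of ?X, OF _ _ _ Ex.prems(4,5) _ _ that(3,4) g Ex.prems(11)])
    using Ex.prems(1,2,3,6,7) that(1,2) by auto
  show ?case
  proof
    assume "sat U I F v (Ex x \<phi>)"
    then obtain b where b: "b \<in> U" "sat U I F (v(x:=b)) \<phi>" by auto
    obtain b' where "b' \<in> U'"
      "\<forall>y\<in>?X. \<forall>z\<in>?X. ((v(x:=b)) y = (v(x:=b)) z) = ((v'(x:=b')) y = (v'(x:=b')) z)"
      "\<forall>y\<in>?X. ((v(x:=b)) y = a) = ((v'(x:=b')) y = a')"
      using ext2[OF Ex.prems(2,4,5,6,7,8,9) b(1) g2] by blast
    then show "sat U' I' F' v' (Ex x \<phi>)" using IH b by auto
  next
    assume "sat U' I' F' v' (Ex x \<phi>)"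
    then obtain b' where b': "b' \<in> U'" "sat U' I' F' (v'(x:=b')) \<phi>" by auto
    have p': "\<forall>y\<in>X. \<forall>z\<in>X. (v' y = v' z) = (v y = v z)" using Ex.prems(8) by blast
    have c': "\<forall>y\<in>X. (v' y = a') = (v y = a)" using Ex.prems(9) by blast
    obtain b where "b \<in> U"
      "\<forall>y\<in>?X. \<forall>z\<in>?X. ((v'(x:=b')) y = (v'(x:=b')) z) = ((v(x:=b)) y = (v(x:=b)) z)"
      "\<forall>y\<in>?X. ((v'(x:=b')) y = a') = ((v(x:=b)) y = a)"
      using ext2[OF Ex.prems(2,5,4,7,6) p' c' b'(1) good_sym[OF g2]] by blast
    then show "sat U I F v (Ex x \<phi>)" using IH[of b b'] b' by auto
  qed
qed



fun NN :: "nat \<Rightarrow> nat \<Rightarrow> 'p form" where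
  "NN m 0 = Eq 0 0"
| "NN m (Suc j) = Conj (NN m j) (Neg (Eq m j))"

fun HH :: "nat \<Rightarrow> nat \<Rightarrow> 'p form" where
  "HH m 0 = Eq 0 0"
| "HH m (Suc k) = Ex m (Conj (NN m m) (HH (Suc m) k))"

lemma sat_NN: "sat U I F w (NN m j) \<longleftrightarrow> (\<forall>i<j. w m \<noteq> w i)"
  by (induction j) (auto simp: less_Suc_eq)

lemma img_upd: "(v(m:=b)) ` {..<Suc m} = insert b (v ` {..<m})"
proof -
  have "(v(m:=b)) ` {..<m} = v ` {..<m}" by (rule image_cong) auto
  have "(v(m:=b)) ` {..<Suc m} = insert ((v(m:=b)) m) ((v(m:=b)) ` {..<m})"
    by (simp only: lessThan_Suc image_insert)
  thus ?thesis using \<open>(v(m:=b)) ` {..<m} = v ` {..<m}\<close> by simp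
qed

lemma sat_HH: "sat U I F v (HH m k) \<longleftrightarrow> (\<exists>S \<subseteq> U - v ` {..<m}. finite S \<and> card S = k)"
proof (induction k arbitrary: m v)
  case 0
  have "sat U I F v (HH m 0)" by simp
  moreover have "\<exists>S \<subseteq> U - v ` {..<m}. finite S \<and> card S = 0" by (intro exI[of _ "{}"]) simp
  ultimately show ?case by blast
next
  case (Suc k)
  have "sat U I F v (HH m (Suc k)) \<longleftrightarrow>
     (\<exists>b\<in>U - v ` {..<m}. \<exists>S \<subseteq> U - insert b (v ` {..<m}). finite S \<and> card S = k)"
  proof -
    have "sat U I F v (HH m (Suc k)) \<longleftrightarrow>
       (\<exists>b\<in>U. (\<forall>i<m. b \<noteq> v i) \<and> sat U I F (v(m:=b)) (HH (Suc m) k))"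
      by (simp add: sat_NN)
    also have "\<dots> \<longleftrightarrow> (\<exists>b\<in>U. (\<forall>i<m. b \<noteq> v i) \<and>
        (\<exists>S \<subseteq> U - insert b (v ` {..<m}). finite S \<and> card S = k))"
      by (simp only: Suc img_upd)
    also have "\<dots> \<longleftrightarrow> (\<exists>b\<in>U - v ` {..<m}. \<exists>S \<subseteq> U - insert b (v ` {..<m}). finite S \<and> card S = k)"
      by blast
    finally show ?thesis .
  qed
  also have "\<dots> \<longleftrightarrow> (\<exists>S \<subseteq> U - v ` {..<m}. finite S \<and> card S = Suc k)"
  proof
    assume "\<exists>b\<in>U - v ` {..<m}. \<exists>S \<subseteq> U - insert b (v ` {..<m}). finite S \<and> card S = k"
    then obtain b S where "b \<in> U - v ` {..<m}" "S \<subseteq> U - insert b (v ` {..<m})" "finite S" "card S = k"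
      by blast
    moreover have "b \<notin> S" using calculation by blast
    ultimately show "\<exists>S \<subseteq> U - v ` {..<m}. finite S \<and> card S = Suc k"
      by (intro exI[of _ "insert b S"]) auto
  next
    assume "\<exists>S \<subseteq> U - v ` {..<m}. finite S \<and> card S = Suc k"
    then obtain S where S: "S \<subseteq> U - v ` {..<m}" "finite S" "card S = Suc k" by blast
    then obtain b where b: "b \<in> S" by fastforce
    show "\<exists>b\<in>U - v ` {..<m}. \<exists>S \<subseteq> U - insert b (v ` {..<m}). finite S \<and> card S = k"
      using S b by (intro bexI[of _ b] exI[of _ "S - {b}"]) auto
  qed
  finally show ?case .
qed

lemma fv_NN: "fv (NN m j) \<subseteq> {0, m} \<union> {..<j}"
  by (induction j) auto

lemma fv_HH: "fv (HH m k :: 'p form) \<subseteq> insert 0 {..<m}"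
proof (induction k arbitrary: m)
  case 0
  then show ?case by simp
next
  case (Suc k)
  have "fv (HH (Suc m) k :: 'p form) \<subseteq> insert 0 {..<Suc m}" by (rule Suc.IH)
  moreover have "fv (NN m m :: 'p form) \<subseteq> {0, m} \<union> {..<m}" by (rule fv_NN)
  ultimately show ?case by auto
qed

lemma wf_NN: "wf_form Sig (NN m j)" by (induction j) auto
lemma wf_HH: "wf_form Sig (HH m k)" by (induction k arbitrary: m) (auto simp: wf_NN)

lemma sentence_HH: "k \<ge> 1 \<Longrightarrow> sentence Sig (HH 0 k)"
proof -
  assume "k \<ge> 1"
  then obtain j where k: "k = Suc j" by (cases k) auto
  have "fv (HH 1 j) \<subseteq> {0}" using fv_HH[of 1 j] by auto
  moreover have "fv (NN 0 0 :: 'a sym form) \<subseteq> {0}" by simp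
  ultimately have "fv (HH 0 k :: 'a sym form) = {}" unfolding k by auto
  thus ?thesis by (simp add: sentence_def wf_HH)
qed

lemma Th_HH:
  assumes "finite U" "U \<noteq> {}" "k \<ge> 1"
  shows "HH 0 k \<in> Th Sig U I F \<longleftrightarrow> k \<le> card U"
proof -
  have s: "sat U I F v (HH 0 k) \<longleftrightarrow> k \<le> card U" for v
  proof -
    have "sat U I F v (HH 0 k) \<longleftrightarrow> (\<exists>S \<subseteq> U. finite S \<and> card S = k)"
      by (simp add: sat_HH)
    also have "\<dots> \<longleftrightarrow> k \<le> card U"
    proof
      assume "\<exists>S \<subseteq> U. finite S \<and> card S = k"
      then obtain S where "S \<subseteq> U" "card S = k" by blast
      then show "k \<le> card U" using card_mono[OF assms(1)] by blast
    next
      assume "k \<le> card U"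
      then obtain S where "S \<subseteq> U" "card S = k" "finite S" by (rule obtain_subset_with_card_n)
      then show "\<exists>S \<subseteq> U. finite S \<and> card S = k" by blast
    qed
    finally show ?thesis .
  qed
  obtain u where "u \<in> U" using assms(2) by blast
  hence "\<exists>v. \<forall>n. v n \<in> U" by (intro exI[of _ "\<lambda>_. u"]) simp
  moreover have "sentence Sig (HH 0 k)" by (rule sentence_HH[OF assms(3)])
  ultimately show ?thesis using s unfolding Th_def by auto
qed

lemma inf_family:
  fixes U :: "nat \<Rightarrow> ('s + nat) set" and Sig :: "'s signature"
  assumes "\<forall>m\<ge>2. is_structure Sig (U m) (F m) \<and> finite (U m) \<and> card (U m) = m \<and>
             \<phi> \<in> Th Sig (U m) (I m) (F m)"
  shows "infinite (theories_with (complete_theories Sig) \<phi>)"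
proof
  assume fin: "finite (theories_with (complete_theories Sig) \<phi>)"
  let ?f = "\<lambda>m. Th Sig (U m) (I m) (F m)"
  have sub: "?f ` {2..} \<subseteq> theories_with (complete_theories Sig) \<phi>"
  proof
    fix T assume "T \<in> ?f ` {2..}"
    then obtain m where m: "m \<ge> 2" "T = ?f m" by auto
    have "T \<in> complete_theories Sig"
      unfolding complete_theories_def using m assms by blast
    moreover have "\<phi> \<in> T" using m assms by blast
    ultimately show "T \<in> theories_with (complete_theories Sig) \<phi>"
      unfolding theories_with_def by blast
  qed
  have ne: "U m \<noteq> {}" if "m \<ge> 2" for m
  proof
    assume "U m = {}"
    then have "card (U m) = 0" by simp
    moreover have "card (U m) = m" using assms that by blast
    ultimately show False using that by simp
  qed
  have inj: "inj_on ?f {2..}"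
  proof (rule inj_onI)
    fix m1 m2 assume m: "m1 \<in> {2..}" "m2 \<in> {2..}" and e: "?f m1 = ?f m2"
    have "HH 0 m1 \<in> ?f m1 \<longleftrightarrow> m1 \<le> m1" using Th_HH[where U="U m1" and k=m1 and Sig=Sig and I="I m1" and F="F m1"] assms m ne by auto
    moreover have "HH 0 m1 \<in> ?f m2 \<longleftrightarrow> m1 \<le> m2" using Th_HH[where U="U m2" and k=m1 and Sig=Sig and I="I m2" and F="F m2"] assms m ne by auto
    moreover have "HH 0 m2 \<in> ?f m2 \<longleftrightarrow> m2 \<le> m2" using Th_HH[where U="U m2" and k=m2 and Sig=Sig and I="I m2" and F="F m2"] assms m ne by auto
    moreover have "HH 0 m2 \<in> ?f m1 \<longleftrightarrow> m2 \<le> m1" using Th_HH[where U="U m1" and k=m2 and Sig=Sig and I="I m1" and F="F m1"] assms m ne by auto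
    ultimately show "m1 = m2" using e by auto
  qed
  have "infinite (?f ` {2..})"
    using inj finite_imageD infinite_Ici[of "2::nat"] by blast
  thus False using sub fin finite_subset by blast
qed



lemma val_ex: "U \<noteq> {} \<Longrightarrow> \<exists>v. \<forall>n::nat. v n \<in> U"
proof -
  assume "U \<noteq> {}"
  then obtain u where "u \<in> U" by blast
  then show ?thesis by (intro exI[of _ "\<lambda>_. u"]) simp
qed

lemma structure_ne: "is_structure Sig U F \<Longrightarrow> U \<noteq> {}"
  unfolding is_structure_def by blast

lemma ex_a:
  assumes "is_structure Sig W G"
  shows "\<exists>a\<in>W. snd Sig c = Some 0 \<longrightarrow> G c [] = a"
proof (cases "snd Sig c = Some 0")
  case True
  then have "G c [] \<in> W" using assms unfolding is_structure_def
    by (metis empty_subsetI list.set(1) list.size(3))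
  then show ?thesis by blast
next
  case False
  then show ?thesis using structure_ne[OF assms] by blast
qed

lemma L:
  assumes s1: "fst Sig = (\<lambda>_. None)" and s2: "\<forall>f n. snd Sig f = Some n \<longrightarrow> f = c \<and> n = 0"
    and st: "is_structure Sig U F" "is_structure Sig U' F'"
    and sen: "sentence Sig \<phi>" and g: "good (1 + qr \<phi>) U U'"
  shows "\<phi> \<in> Th Sig U I F \<longleftrightarrow> \<phi> \<in> Th Sig U' I' F'"
proof -
  obtain a where a: "a \<in> U" "snd Sig c = Some 0 \<longrightarrow> F c [] = a" using ex_a[OF st(1), of c] by blast
  obtain a' where a': "a' \<in> U'" "snd Sig c = Some 0 \<longrightarrow> F' c [] = a'" using ex_a[OF st(2), of c] by blast
  have h: "hyp Sig c a a' F F'" unfolding hyp_def using s1 s2 a a' by metis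
  have eq: "sat U I F v \<phi> = sat U' I' F' v' \<phi>" for v v'
    apply (rule ef[of Sig \<phi> "{}", OF _ _ _ a(1) a'(1) _ _ _ _ _ h])
    using sen g unfolding sentence_def by simp_all
  obtain v0 where v0: "\<forall>n. v0 n \<in> U" using val_ex[OF structure_ne[OF st(1)]] by blast
  obtain v0' where v0': "\<forall>n. v0' n \<in> U'" using val_ex[OF structure_ne[OF st(2)]] by blast
  show ?thesis unfolding Th_def using sen eq v0 v0' by blast
qed

lemma not_both: "U \<noteq> {} \<Longrightarrow> \<phi> \<in> Th Sig U I F \<Longrightarrow> Neg \<phi> \<notin> Th Sig U I F"
proof -
  assume a: "U \<noteq> {}" "\<phi> \<in> Th Sig U I F"
  obtain v where v: "\<forall>n::nat. v n \<in> U" using val_ex[OF a(1)] by blast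
  have "sat U I F v \<phi>" using a(2) v unfolding Th_def by blast
  then show ?thesis using v unfolding Th_def by auto
qed

lemma Um: "finite (Inr ` {..<m} :: ('s + nat) set)" "card (Inr ` {..<m} :: ('s + nat) set) = m"
  by (auto simp: card_image)

lemma Um_struct_const: "m \<ge> 1 \<Longrightarrow> is_structure Sig (Inr ` {..<m} :: ('s + nat) set) (\<lambda>_ _. Inr 0)"
proof -
  assume "m \<ge> 1"
  then have "Inr 0 \<in> (Inr ` {..<m} :: ('s + nat) set)" by simp
  then show ?thesis unfolding is_structure_def by blast
qed

lemma infinite_UNIV_sum: "infinite (UNIV :: ('s + nat) set)"
  by simp

lemma backward:
  fixes Sig :: "'s signature"
  assumes s1: "fst Sig = (\<lambda>_. None)" and s2: "\<forall>f n. snd Sig f = Some n \<longrightarrow> f = c \<and> n = 0"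
  shows "e_minimal Sig (complete_theories Sig)"
  unfolding e_minimal_def
proof (intro conjI allI impI)
  let ?U = "\<lambda>m. Inr ` {..<m} :: ('s + nat) set"
  let ?\<phi>0 = "Ex 0 (Eq 0 0) :: 's sym form"
  have "infinite (theories_with (complete_theories Sig) ?\<phi>0)"
  proof (rule inf_family[where U = ?U and F = "\<lambda>_ _ _. Inr 0" and I = "\<lambda>_ _ _. False"], intro allI impI conjI)
    fix m :: nat assume m: "m \<ge> 2"
    show "is_structure Sig (?U m) (\<lambda>_ _. Inr 0)" by (rule Um_struct_const) (use m in simp)
    show "finite (?U m)" "card (?U m) = m" by (rule Um)+
    show "?\<phi>0 \<in> Th Sig (?U m) (\<lambda>_ _. False) (\<lambda>_ _. Inr 0)"
      unfolding Th_def sentence_def using m by auto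
  qed
  moreover have sub0: "theories_with (complete_theories Sig) ?\<phi>0 \<subseteq> complete_theories Sig"
    unfolding theories_with_def by blast
  ultimately show "infinite (complete_theories Sig)"
    using finite_subset[OF sub0] by blast
next
  fix \<phi> :: "'s sym form"
  assume sen: "sentence Sig \<phi>"
  define k where "k = 1 + qr \<phi>"
  define Cls where "Cls m = {T. \<exists>(U :: ('s+nat) set) I F. is_structure Sig U F \<and> finite U \<and> card U = m \<and> T = Th Sig U I F}" for m
  define Small where "Small = (\<Union>m\<in>{..<k}. Cls m)"
  have sub1: "\<forall>T1\<in>Cls m. \<forall>T2\<in>Cls m. T1 = T2" for m
  proof (intro ballI)
    fix T1 T2 assume "T1 \<in> Cls m" "T2 \<in> Cls m"
    then obtain U1 U2 :: "('s+nat) set" and I1 F1 I2 F2 where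
      u: "is_structure Sig U1 F1" "finite U1" "card U1 = m" "T1 = Th Sig U1 I1 F1"
         "is_structure Sig U2 F2" "finite U2" "card U2 = m" "T2 = Th Sig U2 I2 F2"
      unfolding Cls_def by blast
    have "\<psi> \<in> T1 \<longleftrightarrow> \<psi> \<in> T2" for \<psi>
    proof (cases "sentence Sig \<psi>")
      case True
      have "good (1 + qr \<psi>) U1 U2" unfolding good_def using u by simp
      then show ?thesis using L[OF s1 s2 u(1) u(5) True] u by simp
    next
      case False
      then show ?thesis using u unfolding Th_def by blast
    qed
    then show "T1 = T2" by blast
  qed
  have finCls: "finite (Cls m)" for m
  proof (cases "Cls m = {}")
    case False
    then obtain T where "T \<in> Cls m" by blast
    then have "Cls m \<subseteq> {T}" using sub1 by blast
    then show ?thesis by (rule finite_subset) simp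
  qed simp
  have finSmall: "finite Small" unfolding Small_def by (intro finite_UN_I) (simp_all add: finCls)
  let ?Ui = "UNIV :: ('s + nat) set"
  let ?T0 = "Th Sig ?Ui (\<lambda>_ _. False) (\<lambda>_ _. Inr 0)"
  have sti: "is_structure Sig ?Ui (\<lambda>_ _. Inr 0)" unfolding is_structure_def by simp
  have key: "T \<in> Small \<or> (\<phi> \<in> T \<longleftrightarrow> \<phi> \<in> ?T0) \<and> (\<exists>(U :: ('s+nat) set) I F. U \<noteq> {} \<and> T = Th Sig U I F)"
    if Tin: "T \<in> complete_theories Sig" for T
  proof -
    obtain U :: "('s+nat) set" and I F where u: "is_structure Sig U F" "T = Th Sig U I F"
      using Tin unfolding complete_theories_def by blast
    show ?thesis
    proof (cases "finite U \<and> card U < k")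
      case True
      then have "T \<in> Cls (card U)" unfolding Cls_def using u by blast
      then show ?thesis unfolding Small_def using True by blast
    next
      case False
      have "good (1 + qr \<phi>) U ?Ui" unfolding good_def big_def k_def[symmetric]
        using False infinite_UNIV_sum by auto
      then have "\<phi> \<in> T \<longleftrightarrow> \<phi> \<in> ?T0" using L[OF s1 s2 u(1) sti sen] u(2) by simp
      then show ?thesis using u structure_ne[OF u(1)] by blast
    qed
  qed
  show "finite (theories_with (complete_theories Sig) \<phi>) \<or>
        finite (theories_with (complete_theories Sig) (Neg \<phi>))"
  proof (cases "\<phi> \<in> ?T0")
    case True
    have "theories_with (complete_theories Sig) (Neg \<phi>) \<subseteq> Small"
    proof
      fix T assume "T \<in> theories_with (complete_theories Sig) (Neg \<phi>)"
      then have T: "T \<in> complete_theories Sig" "Neg \<phi> \<in> T" unfolding theories_with_def by auto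
      show "T \<in> Small"
      proof (rule ccontr)
        assume "T \<notin> Small"
        then obtain U :: "('s+nat) set" and I F where "U \<noteq> {}" "T = Th Sig U I F" "\<phi> \<in> T"
          using key[OF T(1)] True by blast
        then show False using not_both[of U \<phi> Sig I F] T(2) by blast
      qed
    qed
    then show ?thesis using finite_subset[OF _ finSmall] by blast
  next
    case False
    have "theories_with (complete_theories Sig) \<phi> \<subseteq> Small"
    proof
      fix T assume "T \<in> theories_with (complete_theories Sig) \<phi>"
      then have T: "T \<in> complete_theories Sig" "\<phi> \<in> T" unfolding theories_with_def by auto
      show "T \<in> Small" using key[OF T(1)] T(2) False by blast
    qed
    then show ?thesis using finite_subset[OF _ finSmall] by blast
  qed
qed



lemma forward:
  fixes Sig :: "'s signature" and U :: "nat \<Rightarrow> ('s + nat) set"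
  assumes sen: "sentence Sig \<phi>"
    and A: "\<forall>m\<ge>2. is_structure Sig (U m) (FA m) \<and> finite (U m) \<and> card (U m) = m \<and>
             \<phi> \<in> Th Sig (U m) (IA m) (FA m)"
    and B: "\<forall>m\<ge>2. is_structure Sig (U m) (FB m) \<and> finite (U m) \<and> card (U m) = m \<and>
             Neg \<phi> \<in> Th Sig (U m) (IB m) (FB m)"
  shows "\<not> e_minimal Sig (complete_theories Sig)"
proof -
  have "infinite (theories_with (complete_theories Sig) \<phi>)" by (rule inf_family[OF A])
  moreover have "infinite (theories_with (complete_theories Sig) (Neg \<phi>))" by (rule inf_family[OF B])
  ultimately show ?thesis unfolding e_minimal_def using sen by blast
qed

lemma Um_ne: "m \<ge> 2 \<Longrightarrow> Inr 0 \<in> (Inr ` {..<m} :: ('s + nat) set)"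
  by simp

lemma Um_1: "m \<ge> 2 \<Longrightarrow> Inr 1 \<in> (Inr ` {..<m} :: ('s + nat) set)"
  by simp

lemma caseA:
  fixes Sig :: "'s signature"
  assumes r: "fst Sig r = Some n"
  shows "\<not> e_minimal Sig (complete_theories Sig)"
proof -
  let ?U = "\<lambda>m. Inr ` {..<m} :: ('s + nat) set"
  let ?\<phi> = "Ex 0 (Pred (Rel r) (replicate n 0)) :: 's sym form"
  have sen: "sentence Sig ?\<phi>" unfolding sentence_def using r by (auto simp: set_replicate_conv_if)
  have sen2: "sentence Sig (Neg ?\<phi>)" using sen unfolding sentence_def by simp
  show ?thesis
  proof (rule forward[where U = ?U and FA = "\<lambda>_ _ _. Inr 0" and FB = "\<lambda>_ _ _. Inr 0"
      and IA = "\<lambda>_ _ _. True" and IB = "\<lambda>_ _ _. False", OF sen]; intro allI impI conjI)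
    fix m :: nat assume m: "m \<ge> 2"
    show "is_structure Sig (?U m) (\<lambda>_ _. Inr 0)" by (rule Um_struct_const) (use m in simp)
    show "is_structure Sig (?U m) (\<lambda>_ _. Inr 0)" by (rule Um_struct_const) (use m in simp)
    show "finite (?U m)" "card (?U m) = m" "finite (?U m)" "card (?U m) = m" by (rule Um)+
    have ne: "Inr 0 \<in> ?U m" using m by simp
    show "?\<phi> \<in> Th Sig (?U m) (\<lambda>_ _. True) (\<lambda>_ _. Inr 0)"
      unfolding Th_def using sen ne by auto
    show "Neg ?\<phi> \<in> Th Sig (?U m) (\<lambda>_ _. False) (\<lambda>_ _. Inr 0)"
      unfolding Th_def using sen2 by auto
  qed
qed

lemma butlast_rep: "butlast (replicate (Suc n) x) = replicate n x"
  by (induction n) auto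

lemma satB: "sat U I F v (Ex 0 (Pred (FunGraph f) (replicate (Suc (Suc n)) 0))) \<longleftrightarrow>
   (\<exists>b\<in>U. F f (replicate (Suc n) b) = b)"
proof -
  have "butlast (replicate (Suc (Suc n)) (0::nat)) = replicate (Suc n) 0" by (rule butlast_rep)
  then show ?thesis by simp
qed

definition gg :: "nat \<Rightarrow> 's + nat \<Rightarrow> 's + nat" where
  "gg m u = (case u of Inl _ \<Rightarrow> Inr 0 | Inr k \<Rightarrow> Inr (Suc k mod m))"

lemma gg_in: "m > 0 \<Longrightarrow> gg m u \<in> Inr ` {..<m}"
  unfolding gg_def by (cases u) auto

lemma gg_nofix: "m \<ge> 2 \<Longrightarrow> u \<in> Inr ` {..<m} \<Longrightarrow> gg m u \<noteq> u"
proof -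
  assume m: "m \<ge> 2" and u: "u \<in> Inr ` {..<m}"
  then obtain k where k: "u = Inr k" "k < m" by blast
  have "Suc k mod m \<noteq> k"
  proof (cases "Suc k < m")
    case True
    then show ?thesis by simp
  next
    case False
    then have "Suc k = m" using k by simp
    then show ?thesis using m by auto
  qed
  then show ?thesis using k unfolding gg_def by simp
qed

lemma caseB:
  fixes Sig :: "'s signature"
  assumes f: "snd Sig f = Some (Suc n)"
  shows "\<not> e_minimal Sig (complete_theories Sig)"
proof -
  let ?U = "\<lambda>m. Inr ` {..<m} :: ('s + nat) set"
  let ?\<phi> = "Ex 0 (Pred (FunGraph f) (replicate (Suc (Suc n)) 0)) :: 's sym form"
  let ?FA = "\<lambda>m::nat. \<lambda>(_::'s) (xs :: ('s + nat) list). if xs = [] then Inr 0 else hd xs"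
  let ?FB = "\<lambda>m::nat. \<lambda>(_::'s) (xs :: ('s + nat) list). if xs = [] then Inr 0 else gg m (hd xs)"
  have sen: "sentence Sig ?\<phi>" unfolding sentence_def using f by (auto simp: set_replicate_conv_if)
  have sen2: "sentence Sig (Neg ?\<phi>)" using sen unfolding sentence_def by simp
  show ?thesis
  proof (rule forward[where U = ?U and FA = ?FA and FB = ?FB
      and IA = "\<lambda>_ _ _. True" and IB = "\<lambda>_ _ _. False", OF sen]; intro allI impI conjI)
    fix m :: nat assume m: "m \<ge> 2"
    have ne: "Inr 0 \<in> ?U m" using m by simp
    show "is_structure Sig (?U m) (?FA m)"
      unfolding is_structure_def
    proof (intro conjI allI impI)
      show "?U m \<noteq> {}" using ne by blast
      fix g k xs assume "snd Sig g = Some k" "length xs = k" "set xs \<subseteq> ?U m"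
      then show "?FA m g xs \<in> ?U m" using ne hd_in_set[of xs] by auto
    qed
    show "is_structure Sig (?U m) (?FB m)"
      unfolding is_structure_def
    proof (intro conjI allI impI)
      show "?U m \<noteq> {}" using ne by blast
      fix g k xs assume "snd Sig g = Some k" "length xs = k" "set xs \<subseteq> ?U m"
      then show "?FB m g xs \<in> ?U m" using ne gg_in[of m "hd xs"] m by auto
    qed
    show "finite (?U m)" "card (?U m) = m" "finite (?U m)" "card (?U m) = m" by (rule Um)+
    show "?\<phi> \<in> Th Sig (?U m) (\<lambda>_ _. True) (?FA m)"
      unfolding Th_def using sen ne by (auto simp: satB)
    have "\<forall>b\<in>?U m. gg m b \<noteq> b" using gg_nofix m by blast
    then show "Neg ?\<phi> \<in> Th Sig (?U m) (\<lambda>_ _. False) (?FB m)"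
      unfolding Th_def using sen2 by (auto simp: satB)
  qed
qed

lemma caseC:
  fixes Sig :: "'s signature"
  assumes cd: "c \<noteq> d" "snd Sig c = Some 0" "snd Sig d = Some 0"
  shows "\<not> e_minimal Sig (complete_theories Sig)"
proof -
  let ?U = "\<lambda>m. Inr ` {..<m} :: ('s + nat) set"
  let ?\<phi> = "Ex 0 (Conj (Pred (FunGraph c) [0]) (Pred (FunGraph d) [0])) :: 's sym form"
  let ?FA = "\<lambda>m::nat. \<lambda>(_::'s) (xs :: ('s + nat) list). Inr 0 :: 's + nat"
  let ?FB = "\<lambda>m::nat. \<lambda>(g::'s) (xs :: ('s + nat) list). if g = c then Inr 0 else Inr 1 :: 's + nat"
  have sen: "sentence Sig ?\<phi>" unfolding sentence_def using cd by auto
  have sen2: "sentence Sig (Neg ?\<phi>)" using sen unfolding sentence_def by simp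
  show ?thesis
  proof (rule forward[where U = ?U and FA = ?FA and FB = ?FB
      and IA = "\<lambda>_ _ _. True" and IB = "\<lambda>_ _ _. False", OF sen]; intro allI impI conjI)
    fix m :: nat assume m: "m \<ge> 2"
    have ne: "Inr 0 \<in> ?U m" using m by simp
    have n1: "Inr 1 \<in> ?U m" using m by simp
    show "is_structure Sig (?U m) (?FA m)" by (rule Um_struct_const) (use m in simp)
    show "is_structure Sig (?U m) (?FB m)"
      unfolding is_structure_def using ne n1 by auto
    show "finite (?U m)" "card (?U m) = m" "finite (?U m)" "card (?U m) = m" by (rule Um)+
    show "?\<phi> \<in> Th Sig (?U m) (\<lambda>_ _. True) (?FA m)"
      unfolding Th_def using sen ne by auto
    show "Neg ?\<phi> \<in> Th Sig (?U m) (\<lambda>_ _. False) (?FB m)"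
      unfolding Th_def using sen2 cd(1) by auto
  qed
qed

lemma classify:
  fixes Sig :: "'s signature"
  assumes nA: "\<not> (\<exists>r n. fst Sig r = Some n)"
    and nB: "\<not> (\<exists>f n. snd Sig f = Some (Suc n))"
    and nC: "\<not> (\<exists>c d. c \<noteq> d \<and> snd Sig c = Some 0 \<and> snd Sig d = Some 0)"
  shows "empty_signature Sig \<or> single_constant_signature Sig"
proof -
  have f: "fst Sig = (\<lambda>_. None)" using nA by (intro ext) (metis not_Some_eq)
  have s0: "snd Sig g = None \<or> snd Sig g = Some 0" for g
    using nB by (metis not0_implies_Suc not_Some_eq)
  show ?thesis
  proof (cases "\<exists>c. snd Sig c = Some 0")
    case False
    then have "snd Sig = (\<lambda>_. None)" using s0 by (intro ext) metis
    then show ?thesis using f unfolding empty_signature_def by simp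
  next
    case True
    then obtain c where c: "snd Sig c = Some 0" by blast
    have "snd Sig = (\<lambda>_. None)(c := Some 0)"
    proof
      fix g show "snd Sig g = ((\<lambda>_. None)(c := Some 0)) g"
        using s0[of g] c nC by (cases "g = c") auto
    qed
    then show ?thesis using f unfolding single_constant_signature_def by blast
  qed
qed

theorem theorem2p1:
  fixes Sig :: "'s signature"
  shows "e_minimal Sig (complete_theories Sig) \<longleftrightarrow>
           empty_signature Sig \<or> single_constant_signature Sig"
proof
  assume em: "e_minimal Sig (complete_theories Sig)"
  show "empty_signature Sig \<or> single_constant_signature Sig"
  proof (rule classify)
    show "\<not> (\<exists>r n. fst Sig r = Some n)"
    proof
      assume "\<exists>r n. fst Sig r = Some n"
      then obtain r n where "fst Sig r = Some n" by blast
      then show False using caseA[of Sig r n] em by simp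
    qed
    show "\<not> (\<exists>f n. snd Sig f = Some (Suc n))"
    proof
      assume "\<exists>f n. snd Sig f = Some (Suc n)"
      then obtain f n where "snd Sig f = Some (Suc n)" by blast
      then show False using caseB[of Sig f n] em by simp
    qed
    show "\<not> (\<exists>c d. c \<noteq> d \<and> snd Sig c = Some 0 \<and> snd Sig d = Some 0)"
    proof
      assume "\<exists>c d. c \<noteq> d \<and> snd Sig c = Some 0 \<and> snd Sig d = Some 0"
      then obtain c d where "c \<noteq> d" "snd Sig c = Some 0" "snd Sig d = Some 0" by blast
      then show False using caseC[of c d Sig] em by simp
    qed
  qed
next
  assume "empty_signature Sig \<or> single_constant_signature Sig"
  then obtain c where s1: "fst Sig = (\<lambda>_. None)" and s2: "\<forall>f n. snd Sig f = Some n \<longrightarrow> f = c \<and> n = 0"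
    unfolding empty_signature_def single_constant_signature_def by (metis fun_upd_apply option.distinct(1) option.inject)
  show "e_minimal Sig (complete_theories Sig)" by (rule backward[OF s1 s2])
qed


end
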